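(* Let $\mathcal D$ be universal, $\mathrm M=(M,d)\in\mathfrak U_{\mathcal D}$, $A\subseteq M$ finite, and $\mathfrak p_0,\mathfrak p_1,\mathfrak p_2$ Katětov functions of $\mathrm M$ with domain $A$. Then $d_{\min}(\mathfrak p_1,\mathfrak p_2)\le d_{\min}(\mathfrak p_0,\mathfrak p_1)+d_{\min}(\mathfrak p_0,\mathfrak p_2)$.
   Context: $\mathcal D$ is a finite subset of $\mathbb R_{\ge0}$ containing $0$. $\mathfrak U_{\mathcal D}$ is the class of countable homogeneous metric spaces (every isometry between finite subspaces extends to an isometry of the space onto itself) with distance set exactly $\mathcal D$ into which every finite metric space with distances in $\mathcal D$ embeds isometrically; $\mathcal D$ is universal if this class is nonempty. A Katětov function of $\mathrm M$ is a map $\mathfrak t:F\to\mathcal D\setminus\{0\}$, $F\subseteq M$ finite, with $|\mathfrak t(x)-\mathfrak t(y)|\le d(x,y)\le\mathfrak t(x)+\mathfrak t(y)$ for all $x,y\in F$; $\operatorname{orb}(\mathfrak t)=\{y\in M\setminus F: d(y,x)=\mathfrak t(x)\ \forall x\in F\}$. $d_{\min}(\mathfrak s,\mathfrak t)=\min\{d(x,y):x\in\operatorname{orb}(\mathfrak s),y\in\operatorname{orb}(\mathfrak t)\}$. *)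

theory Defs
  imports Complex_Main "HOL-Library.Countable_Set"
begin

definition metric_on :: "'a set \<Rightarrow> ('a \<Rightarrow> 'a \<Rightarrow> real) \<Rightarrow> bool" where
  "metric_on M d \<longleftrightarrow>
     (\<forall>x\<in>M. \<forall>y\<in>M. d x y \<ge> 0 \<and> (d x y = 0 \<longleftrightarrow> x = y) \<and> d x y = d y x) \<and>
     (\<forall>x\<in>M. \<forall>y\<in>M. \<forall>z\<in>M. d x z \<le> d x y + d y z)"

definition dist_set :: "'a set \<Rightarrow> ('a \<Rightarrow> 'a \<Rightarrow> real) \<Rightarrow> real set" where
  "dist_set M d = {d x y | x y. x \<in> M \<and> y \<in> M}"

definition isometry_betw :: "('a \<Rightarrow> 'a \<Rightarrow> real) \<Rightarrow> ('b \<Rightarrow> 'b \<Rightarrow> real) \<Rightarrow> ('a \<Rightarrow> 'b) \<Rightarrow> 'a set \<Rightarrow> 'b set \<Rightarrow> bool" where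
  "isometry_betw d e f A B \<longleftrightarrow> bij_betw f A B \<and> (\<forall>x\<in>A. \<forall>y\<in>A. e (f x) (f y) = d x y)"

definition homogeneous :: "'a set \<Rightarrow> ('a \<Rightarrow> 'a \<Rightarrow> real) \<Rightarrow> bool" where
  "homogeneous M d \<longleftrightarrow>
     (\<forall>A B f. A \<subseteq> M \<and> B \<subseteq> M \<and> finite A \<and> finite B \<and> isometry_betw d d f A B \<longrightarrow>
        (\<exists>g. isometry_betw d d g M M \<and> (\<forall>x\<in>A. g x = f x)))"

text \<open>Every finite metric space with distances in D embeds isometrically.
  Finite metric spaces are represented (up to isometry) on finite subsets of nat.\<close>
definition embeds_all_finite :: "real set \<Rightarrow> 'a set \<Rightarrow> ('a \<Rightarrow> 'a \<Rightarrow> real) \<Rightarrow> bool" where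
  "embeds_all_finite D M d \<longleftrightarrow>
     (\<forall>(F::nat set) e. finite F \<and> metric_on F e \<and> dist_set F e \<subseteq> D \<longrightarrow>
        (\<exists>f. inj_on f F \<and> f ` F \<subseteq> M \<and> (\<forall>x\<in>F. \<forall>y\<in>F. d (f x) (f y) = e x y)))"

definition in_U :: "real set \<Rightarrow> 'a set \<Rightarrow> ('a \<Rightarrow> 'a \<Rightarrow> real) \<Rightarrow> bool" where
  "in_U D M d \<longleftrightarrow> countable M \<and> metric_on M d \<and> homogeneous M d \<and>
     dist_set M d = D \<and> embeds_all_finite D M d"

definition universal_dist_set :: "real set \<Rightarrow> bool" where
  "universal_dist_set D \<longleftrightarrow> (\<exists>(M::nat set) d. in_U D M d)"

text \<open>Katetov function with domain F (values outside F irrelevant).\<close>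
definition katetov :: "real set \<Rightarrow> 'a set \<Rightarrow> ('a \<Rightarrow> 'a \<Rightarrow> real) \<Rightarrow> 'a set \<Rightarrow> ('a \<Rightarrow> real) \<Rightarrow> bool" where
  "katetov D M d F t \<longleftrightarrow> F \<subseteq> M \<and> finite F \<and> (\<forall>x\<in>F. t x \<in> D - {0}) \<and>
     (\<forall>x\<in>F. \<forall>y\<in>F. \<bar>t x - t y\<bar> \<le> d x y \<and> d x y \<le> t x + t y)"

definition orb :: "'a set \<Rightarrow> ('a \<Rightarrow> 'a \<Rightarrow> real) \<Rightarrow> 'a set \<Rightarrow> ('a \<Rightarrow> real) \<Rightarrow> 'a set" where
  "orb M d F t = {y \<in> M - F. \<forall>x\<in>F. d y x = t x}"

definition d_min :: "'a set \<Rightarrow> ('a \<Rightarrow> 'a \<Rightarrow> real) \<Rightarrow> 'a set \<Rightarrow> ('a \<Rightarrow> real) \<Rightarrow> ('a \<Rightarrow> real) \<Rightarrow> real" where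
  "d_min M d F s t = Min {d x y | x y. x \<in> orb M d F s \<and> y \<in> orb M d F t}"

end

theory Submission
  imports Defs
begin

lemma orb_nonempty:
  assumes U: "in_U D M d" and K: "katetov D M d A p" and z0: "0 \<in> D"
  shows "orb M d A p \<noteq> {}"
proof -
  have met: "metric_on M d" and hom: "homogeneous M d" and ds: "dist_set M d = D"
    and emb: "embeds_all_finite D M d" using U unfolding in_U_def by auto
  have AM: "A \<subseteq> M" and fA: "finite A" and pD: "\<forall>x\<in>A. p x \<in> D - {0}"
    and pk: "\<forall>x\<in>A. \<forall>y\<in>A. \<bar>p x - p y\<bar> \<le> d x y \<and> d x y \<le> p x + p y"
    using K unfolding katetov_def by auto
  define n where "n = card A"
  obtain h where h: "bij_betw h {0..<n} A" using ex_bij_betw_nat_finite[OF fA] n_def by auto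
  have hA: "\<And>i. i < n \<Longrightarrow> h i \<in> A" using h by (auto simp: bij_betw_def)
  have hinj: "\<And>i j. i < n \<Longrightarrow> j < n \<Longrightarrow> h i = h j \<Longrightarrow> i = j"
    using h by (auto simp: bij_betw_def inj_on_def)
  have dpos: "\<And>x y. x \<in> M \<Longrightarrow> y \<in> M \<Longrightarrow> d x y \<ge> 0 \<and> (d x y = 0 \<longleftrightarrow> x = y) \<and> d x y = d y x"
    using met unfolding metric_on_def by auto
  have dtri: "\<And>x y z. x \<in> M \<Longrightarrow> y \<in> M \<Longrightarrow> z \<in> M \<Longrightarrow> d x z \<le> d x y + d y z"
    using met unfolding metric_on_def by auto
  have Dnn: "\<And>x. x \<in> A \<Longrightarrow> p x > 0"
  proof -
    fix x assume x: "x \<in> A"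
    have "p x \<le> \<bar>p x - p x\<bar> + p x" by simp
    from pk x have "\<bar>p x - p x\<bar> \<le> d x x" by blast
    have "d x x = 0" using dpos[of x x] x AM by auto
    have "p x \<ge> 0"
    proof -
      have "d x x \<le> p x + p x" using pk x by blast
      thus ?thesis using \<open>d x x = 0\<close> by simp
    qed
    moreover have "p x \<noteq> 0" using pD x by auto
    ultimately show "p x > 0" by simp
  qed
  define e where "e = (\<lambda>i j. if i = j then 0 else if i = n then p (h j) else if j = n then p (h i) else d (h i) (h j))"
  define F where "F = {0..n}"
  have inF: "\<And>i. i \<in> F \<Longrightarrow> i \<noteq> n \<Longrightarrow> i < n" unfolding F_def by auto
  have hM: "\<And>i. i < n \<Longrightarrow> h i \<in> M" using hA AM by auto
  have metF: "metric_on F e"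
    unfolding metric_on_def
  proof (intro conjI ballI)
    fix x y assume x: "x \<in> F" and y: "y \<in> F"
    show "e x y \<ge> 0" using dpos hM inF x y Dnn hA unfolding e_def
      by (auto simp: less_imp_le)
    show "(e x y = 0) = (x = y)" using dpos hM inF x y Dnn hA hinj unfolding e_def
      by (smt (verit))
    show "e x y = e y x" using dpos hM inF x y unfolding e_def by auto
  next
    fix x y z assume x: "x \<in> F" and y: "y \<in> F" and z: "z \<in> F"
    have nn: "\<And>a b. a \<in> F \<Longrightarrow> b \<in> F \<Longrightarrow> e a b \<ge> 0"
      using dpos hM inF Dnn hA unfolding e_def by (auto simp: less_imp_le)
    show "e x z \<le> e x y + e y z"
    proof (cases "x = z")
      case True thus ?thesis using nn[OF x y] nn[OF y z] unfolding e_def by auto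
    next
      case xz: False
      show ?thesis
      proof (cases "y = x \<or> y = z")
        case True thus ?thesis using nn[OF x z] unfolding e_def by auto
      next
        case False
        hence yx: "y \<noteq> x" and yz: "y \<noteq> z" by auto
        show ?thesis
        proof (cases "x = n")
          case True
          hence yn: "y < n" and zn: "z < n" using inF y z yx xz by auto
          have "\<bar>p (h z) - p (h y)\<bar> \<le> d (h z) (h y)" using pk hA yn zn by blast
          thus ?thesis using True yx xz yz yn zn dpos[OF hM[OF yn] hM[OF zn]] unfolding e_def by auto
        next
          case xn: False
          hence xl: "x < n" using inF x by auto
          show ?thesis
          proof (cases "z = n")
            case True
            hence yn: "y < n" using inF y yz by auto
            have "\<bar>p (h x) - p (h y)\<bar> \<le> d (h x) (h y)" using pk hA yn xl by blast
            thus ?thesis using True yx xz yz yn xl unfolding e_def by auto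
          next
            case zn': False
            hence zl: "z < n" using inF z by auto
            show ?thesis
            proof (cases "y = n")
              case True
              have "d (h x) (h z) \<le> p (h x) + p (h z)" using pk hA zl xl by blast
              thus ?thesis using True yx xz yz xl zl unfolding e_def by auto
            next
              case False
              hence yl: "y < n" using inF y by auto
              show ?thesis using dtri[OF hM[OF xl] hM[OF yl] hM[OF zl]] yx xz yz xl zl yl
                unfolding e_def by auto
            qed
          qed
        qed
      qed
    qed
  qed
  have dsF: "dist_set F e \<subseteq> D"
  proof
    fix v assume "v \<in> dist_set F e"
    then obtain i j where v: "v = e i j" and i: "i \<in> F" and j: "j \<in> F" unfolding dist_set_def by auto
    have dM: "\<And>a b. a \<in> M \<Longrightarrow> b \<in> M \<Longrightarrow> d a b \<in> D" using ds unfolding dist_set_def by auto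
    show "v \<in> D" using v i j inF hA pD dM hM z0 unfolding e_def by auto
  qed
  have fF: "finite F" unfolding F_def by auto
  obtain f where finj: "inj_on f F" and fM: "f ` F \<subseteq> M" and fd: "\<forall>x\<in>F. \<forall>y\<in>F. d (f x) (f y) = e x y"
    using emb fF metF dsF unfolding embeds_all_finite_def by blast
  define B where "B = f ` {0..<n}"
  define \<phi> where "\<phi> = (\<lambda>x. h (inv_into {0..<n} f x))"
  have sub: "{0..<n} \<subseteq> F" unfolding F_def by auto
  have fb: "bij_betw f {0..<n} B" unfolding B_def using finj sub
    by (simp add: bij_betw_imageI inj_on_subset)
  have phib: "bij_betw \<phi> B A" unfolding \<phi>_def
    using bij_betw_trans[OF bij_betw_inv_into[OF fb] h] by (simp add: comp_def)
  have BM: "B \<subseteq> M" using fM sub B_def by auto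
  have iso: "isometry_betw d d \<phi> B A"
    unfolding isometry_betw_def
  proof (intro conjI phib ballI)
    fix x y assume x: "x \<in> B" and y: "y \<in> B"
    then obtain i j where i: "i < n" and j: "j < n" and xi: "x = f i" and yj: "y = f j"
      unfolding B_def by auto
    have pi: "\<phi> x = h i" "\<phi> y = h j" unfolding \<phi>_def xi yj
      using i j finj sub by (auto simp: inv_into_f_f inj_on_subset)
    have iF: "i \<in> F" "j \<in> F" using sub i j by auto
    have "d x y = e i j" using fd iF xi yj by auto
    then show "d (\<phi> x) (\<phi> y) = d x y" unfolding pi using dpos[OF hM[OF i] hM[OF j]] dpos[OF hM[OF i] hM[OF i]] i j
      unfolding e_def by auto
  qed
  obtain g where g: "isometry_betw d d g M M" and gB: "\<forall>x\<in>B. g x = \<phi> x"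
    using hom BM AM fA iso unfolding homogeneous_def B_def by (metis finite_atLeastLessThan finite_imageI)
  have nF: "n \<in> F" unfolding F_def by auto
  have fnM: "f n \<in> M" using fM nF by auto
  have gM: "g (f n) \<in> M" using g fnM unfolding isometry_betw_def bij_betw_def by auto
  have "g (f n) \<in> orb M d A p"
    unfolding orb_def
  proof (intro CollectI conjI ballI DiffI gM)
    have ga: "\<And>a. a \<in> A \<Longrightarrow> \<exists>i<n. a = g (f i) \<and> h i = a"
    proof -
      fix a assume a: "a \<in> A"
      then obtain i where i: "i < n" and ai: "a = h i" using h unfolding bij_betw_def by auto
      have "\<phi> (f i) = h i" unfolding \<phi>_def using i finj sub by (auto simp: inv_into_f_f inj_on_subset)
      thus "\<exists>i<n. a = g (f i) \<and> h i = a" using gB i ai B_def by auto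
    qed
    show "g (f n) \<notin> A"
    proof
      assume "g (f n) \<in> A"
      then obtain i where i: "i < n" and e1: "g (f n) = g (f i)" using ga by blast
      have iF: "i \<in> F" using i unfolding F_def by simp
      have "f i \<in> M" using fM iF by blast
      hence "f n = f i" using e1 g fnM unfolding isometry_betw_def bij_betw_def inj_on_def by blast
      hence "n = i" using finj nF iF unfolding inj_on_def by blast
      thus False using i by auto
    qed
    fix a assume a: "a \<in> A"
    then obtain i where i: "i < n" and ag: "a = g (f i)" and hi: "h i = a" using ga by blast
    have iF: "i \<in> F" using i unfolding F_def by simp
    have fiM: "f i \<in> M" using fM iF by blast
    have "d (g (f n)) (g (f i)) = d (f n) (f i)" using g fnM fiM unfolding isometry_betw_def by blast
    also have "\<dots> = e n i" using fd nF iF by blast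
    also have "\<dots> = p a" using i hi unfolding e_def by auto
    finally show "d (g (f n)) a = p a" using ag by simp
  qed
  thus ?thesis by auto
qed

lemma dmin_props:
  assumes U: "in_U D M d" and fD: "finite D" and K1: "katetov D M d A s" and K2: "katetov D M d A t" and z0: "0 \<in> D"
  shows "\<exists>x y. x \<in> orb M d A s \<and> y \<in> orb M d A t \<and> d x y = d_min M d A s t"
    and "\<And>x y. x \<in> orb M d A s \<Longrightarrow> y \<in> orb M d A t \<Longrightarrow> d_min M d A s t \<le> d x y"
proof -
  let ?S = "{d x y | x y. x \<in> orb M d A s \<and> y \<in> orb M d A t}"
  have ds: "dist_set M d = D" using U unfolding in_U_def by auto
  have "?S \<subseteq> D" using ds unfolding dist_set_def orb_def by auto
  hence fS: "finite ?S" using fD finite_subset by blast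
  obtain x0 where x0: "x0 \<in> orb M d A s" using orb_nonempty[OF U K1 z0] by auto
  obtain y0 where y0: "y0 \<in> orb M d A t" using orb_nonempty[OF U K2 z0] by auto
  have ne: "?S \<noteq> {}" using x0 y0 by auto
  have "d_min M d A s t \<in> ?S" unfolding d_min_def using Min_in[OF fS ne] .
  then obtain x1 y1 where h1: "d_min M d A s t = d x1 y1" and h2: "x1 \<in> orb M d A s" and h3: "y1 \<in> orb M d A t"
    by blast
  show "\<exists>x y. x \<in> orb M d A s \<and> y \<in> orb M d A t \<and> d x y = d_min M d A s t"
    using h1 h2 h3 by metis
  fix x y assume "x \<in> orb M d A s" "y \<in> orb M d A t"
  hence "d x y \<in> ?S" by auto
  thus "d_min M d A s t \<le> d x y" unfolding d_min_def using Min_le[OF fS] by blast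
qed

theorem lemma6p1:
  fixes D :: "real set" and M :: "'a set" and d :: "'a \<Rightarrow> 'a \<Rightarrow> real"
    and A :: "'a set" and p0 p1 p2 :: "'a \<Rightarrow> real"
  assumes "finite D" and "D \<subseteq> {0..}" and "0 \<in> D"
    and "universal_dist_set D"
    and "in_U D M d"
    and "A \<subseteq> M" and "finite A"
    and "katetov D M d A p0" and "katetov D M d A p1" and "katetov D M d A p2"
  shows "d_min M d A p1 p2 \<le> d_min M d A p0 p1 + d_min M d A p0 p2"
proof -
  note U = assms(5)
  have met: "metric_on M d" and hom: "homogeneous M d" using U unfolding in_U_def by auto
  have dsym: "\<And>x y. x \<in> M \<Longrightarrow> y \<in> M \<Longrightarrow> d x y = d y x" using met unfolding metric_on_def by auto
  have d0: "\<And>x. x \<in> M \<Longrightarrow> d x x = 0" using met unfolding metric_on_def by auto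
  have dtri: "\<And>x y z. x \<in> M \<Longrightarrow> y \<in> M \<Longrightarrow> z \<in> M \<Longrightarrow> d x z \<le> d x y + d y z"
    using met unfolding metric_on_def by auto
  obtain x0 x1 where x0: "x0 \<in> orb M d A p0" and x1: "x1 \<in> orb M d A p1" and dx: "d x0 x1 = d_min M d A p0 p1"
    using dmin_props(1)[OF U assms(1) assms(8) assms(9) assms(3)] by blast
  obtain y0 y2 where y0: "y0 \<in> orb M d A p0" and y2: "y2 \<in> orb M d A p2" and dy: "d y0 y2 = d_min M d A p0 p2"
    using dmin_props(1)[OF U assms(1) assms(8) assms(10) assms(3)] by blast
  have x0M: "x0 \<in> M" "x0 \<notin> A" "\<forall>a\<in>A. d x0 a = p0 a" using x0 unfolding orb_def by auto
  have y0M: "y0 \<in> M" "y0 \<notin> A" "\<forall>a\<in>A. d y0 a = p0 a" using y0 unfolding orb_def by auto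
  have y2M: "y2 \<in> M" "y2 \<notin> A" "\<forall>a\<in>A. d y2 a = p2 a" using y2 unfolding orb_def by auto
  have x1M: "x1 \<in> M" using x1 unfolding orb_def by auto
  define f where "f = (\<lambda>x. if x = y0 then x0 else x)"
  have iso: "isometry_betw d d f (insert y0 A) (insert x0 A)"
    unfolding isometry_betw_def
  proof (intro conjI ballI)
    show "bij_betw f (insert y0 A) (insert x0 A)" unfolding bij_betw_def inj_on_def f_def
      using x0M y0M by auto
    fix x y assume x: "x \<in> insert y0 A" and y: "y \<in> insert y0 A"
    show "d (f x) (f y) = d x y" using x y x0M y0M assms(6) dsym d0 unfolding f_def
      by (cases "x = y0"; cases "y = y0") (auto, metis subsetD)
  qed
  obtain g where g: "isometry_betw d d g M M" and gf: "\<forall>x\<in>insert y0 A. g x = f x"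
    using hom iso assms(6,7) x0M y0M unfolding homogeneous_def by (metis finite_insert insert_subset)
  have gA: "\<And>a. a \<in> A \<Longrightarrow> g a = a" using gf y0M unfolding f_def by auto
  have gy0: "g y0 = x0" using gf unfolding f_def by auto
  have gdist: "\<And>x y. x \<in> M \<Longrightarrow> y \<in> M \<Longrightarrow> d (g x) (g y) = d x y" using g unfolding isometry_betw_def by blast
  have gM: "g y2 \<in> M" using g y2M unfolding isometry_betw_def bij_betw_def by auto
  have gorb: "g y2 \<in> orb M d A p2"
    unfolding orb_def
  proof (intro CollectI conjI ballI DiffI gM)
    show "g y2 \<notin> A"
    proof
      assume gyA: "g y2 \<in> A"
      hence e: "g y2 = g (g y2)" using gA by auto
      have "y2 = g y2" using g y2M gM e unfolding isometry_betw_def bij_betw_def inj_on_def by metis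
      thus False using gyA y2M by auto
    qed
    fix a assume a: "a \<in> A"
    have "d (g y2) (g a) = d y2 a" using gdist y2M a assms(6) by auto
    thus "d (g y2) a = p2 a" using gA a y2M by auto
  qed
  have e2: "d x0 (g y2) = d y0 y2" using gdist[OF y0M(1) y2M(1)] gy0 by simp
  have "d_min M d A p1 p2 \<le> d x1 (g y2)" using dmin_props(2)[OF U assms(1) assms(9) assms(10) assms(3) x1 gorb] .
  also have "\<dots> \<le> d x1 x0 + d x0 (g y2)" using dtri x1M x0M gM by blast
  also have "\<dots> = d_min M d A p0 p1 + d_min M d A p0 p2"
    using dx dy e2 dsym x1M x0M by auto
  finally show ?thesis .
qed

end
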